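(* Consider the remote-attestation Stackelberg game described in the context with a single device $\delta$ (so $\mathcal{D}=\{\delta\}$ and the only class is $\mathcal{E}=\{\delta\}$) and a single attestation method $m$. Let $$\tau_\delta=\frac{1}{\mu^m}\cdot\frac{C_A^{\mathcal{E}}+C_A^\delta-G_A^\delta}{L_A^\delta-G_A^\delta}.$$ Then the defender's optimal attestation strategy ${p^*}_\delta^m$ is $${p^*}_\delta^m=\begin{cases}0&\text{if } C_D^m\ge (G_D^\delta-L_D^\delta)\cdot\mu^m \text{ and } \tau_\delta\ge \frac{L_D^\delta}{-C_D^m},\\ \tau_\delta&\text{otherwise.}\end{cases}$$
   Context: Remote-attestation game: there is a finite set $\mathcal{D}$ of devices partitioned into pairwise disjoint device classes, and a finite set $\mathcal{M}$ of attestation methods. Constants: for each method $m$, a detection probability $\mu^m$ and a defender cost $C_D^m$ of running $m$ on a device; for each device $\delta$, an attacker cost $C_A^\delta$ of attacking it; for each class $\mathcal{E}$, an attacker exploit-development cost $C_A^{\mathcal{E}}$; for each device $\delta$, defender gain $G_D^\delta$ and loss $L_D^\delta$, attacker gain $G_A^\delta$ and loss $L_A^\delta$ (losses are negative values), with $G_D^\delta=-L_A^\delta$ and $L_D^\delta=-G_A^\delta$. The defender (leader) chooses $\vec p=\langle p_\delta^m\rangle\in[0,1]^{|\mathcal{D}\times\mathcal{M}|}$ ($p_\delta^m$ = probability of running $m$ on $\delta$); the attacker (follower) chooses $\vec a\in\{0,1\}^{|\mathcal{D}|}$. $P_\delta(\vec p)=1-\prod_{m}(1-\mu^m p_\delta^m)$;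 $C_D^T(\vec p)=\sum_\delta\sum_m C_D^m p_\delta^m$; $U_D(\vec p,\vec a)=\sum_\delta[G_D^\delta P_\delta(\vec p)+L_D^\delta(1-P_\delta(\vec p))]a_\delta-C_D^T(\vec p)$; $C_A^T(\vec a)=\sum_{\mathcal{E}}\big(C_A^{\mathcal{E}}1_{\{\exists\delta\in\mathcal{E}:a_\delta=1\}}+\sum_{\delta\in\mathcal{E}}C_A^\delta a_\delta\big)$; $U_A(\vec p,\vec a)=\sum_\delta[L_A^\delta P_\delta(\vec p)+G_A^\delta(1-P_\delta(\vec p))]a_\delta-C_A^T(\vec a)$. Attacker best response: $\mathcal{F}_A(\vec p)=\operatorname{argmax}_{\vec a}U_A(\vec p,\vec a)$. The defender's optimal strategy is $\vec p^*=\operatorname{argmax}_{\vec p,\ \vec a\in\mathcal{F}_A(\vec p)}U_D(\vec p,\vec a)$ (i.e., ties in the attacker's best response are broken in favor of the defender). *)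

theory Defs
  imports Main "HOL.Real"
begin

text \<open>A defender strategy is p :: 'd => 'm => real (p d m = probability of running m on d),
  an attacker strategy is a :: 'd => bool (a d = attack device d).\<close>

record ('d, 'm) ra_game =
  devs    :: "'d set"
  meths   :: "'m set"
  classes :: "'d set set"
  mu      :: "'m \<Rightarrow> real"
  CD      :: "'m \<Rightarrow> real"
  CAdev   :: "'d \<Rightarrow> real"
  CAcls   :: "'d set \<Rightarrow> real"
  GD      :: "'d \<Rightarrow> real"
  LD      :: "'d \<Rightarrow> real"
  GA      :: "'d \<Rightarrow> real"
  LA      :: "'d \<Rightarrow> real"

definition Pdet :: "('d, 'm) ra_game \<Rightarrow> ('d \<Rightarrow> 'm \<Rightarrow> real) \<Rightarrow> 'd \<Rightarrow> real" where
  "Pdet g p d = 1 - (\<Prod>m\<in>meths g. 1 - mu g m * p d m)"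

definition CDT :: "('d, 'm) ra_game \<Rightarrow> ('d \<Rightarrow> 'm \<Rightarrow> real) \<Rightarrow> real" where
  "CDT g p = (\<Sum>d\<in>devs g. \<Sum>m\<in>meths g. CD g m * p d m)"

definition UD :: "('d, 'm) ra_game \<Rightarrow> ('d \<Rightarrow> 'm \<Rightarrow> real) \<Rightarrow> ('d \<Rightarrow> bool) \<Rightarrow> real" where
  "UD g p a = (\<Sum>d\<in>devs g. (GD g d * Pdet g p d + LD g d * (1 - Pdet g p d)) * of_bool (a d))
              - CDT g p"

definition CAT :: "('d, 'm) ra_game \<Rightarrow> ('d \<Rightarrow> bool) \<Rightarrow> real" where
  "CAT g a = (\<Sum>E\<in>classes g. CAcls g E * of_bool (\<exists>d\<in>E. a d)
                               + (\<Sum>d\<in>E. CAdev g d * of_bool (a d)))"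

definition UA :: "('d, 'm) ra_game \<Rightarrow> ('d \<Rightarrow> 'm \<Rightarrow> real) \<Rightarrow> ('d \<Rightarrow> bool) \<Rightarrow> real" where
  "UA g p a = (\<Sum>d\<in>devs g. (LA g d * Pdet g p d + GA g d * (1 - Pdet g p d)) * of_bool (a d))
              - CAT g a"

definition feasible :: "('d, 'm) ra_game \<Rightarrow> ('d \<Rightarrow> 'm \<Rightarrow> real) \<Rightarrow> bool" where
  "feasible g p \<longleftrightarrow> (\<forall>d\<in>devs g. \<forall>m\<in>meths g. 0 \<le> p d m \<and> p d m \<le> 1)"

definition best_resp :: "('d, 'm) ra_game \<Rightarrow> ('d \<Rightarrow> 'm \<Rightarrow> real) \<Rightarrow> ('d \<Rightarrow> bool) set" where
  "best_resp g p = {a. \<forall>a'. UA g p a' \<le> UA g p a}"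

text \<open>Optimal defender strategies (strong Stackelberg: ties broken in favour of the defender):
  p is feasible and, together with some best response a, attains the maximum of U_D over all
  feasible p' and best responses a' to p'.\<close>
definition optimal_def :: "('d, 'm) ra_game \<Rightarrow> ('d \<Rightarrow> 'm \<Rightarrow> real) \<Rightarrow> bool" where
  "optimal_def g p \<longleftrightarrow> feasible g p \<and>
     (\<exists>a\<in>best_resp g p. \<forall>p' a'. feasible g p' \<and> a' \<in> best_resp g p' \<longrightarrow> UD g p' a' \<le> UD g p a)"

end

theory Submission
  imports Defs
begin

lemma UA_simp:
  assumes "devs g = {\<delta>}" and "meths g = {m}" and "classes g = {{\<delta>}}"
  shows "UA g p a = (if a \<delta> then LA g \<delta> * (mu g m * p \<delta> m) + GA g \<delta> * (1 - mu g m * p \<delta> m)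
           - CAcls g {\<delta>} - CAdev g \<delta> else 0)"
  using assms by (simp add: UA_def CAT_def Pdet_def algebra_simps)

lemma UD_simp:
  assumes "devs g = {\<delta>}" and "meths g = {m}"
  shows "UD g p a = (if a \<delta> then GD g \<delta> * (mu g m * p \<delta> m) + LD g \<delta> * (1 - mu g m * p \<delta> m) else 0)
           - CD g m * p \<delta> m"
  using assms by (simp add: UD_def CDT_def Pdet_def algebra_simps)

lemma br_iff:
  assumes "devs g = {\<delta>}" and "meths g = {m}" and "classes g = {{\<delta>}}"
  shows "a \<in> best_resp g p \<longleftrightarrow>
     (let A = LA g \<delta> * (mu g m * p \<delta> m) + GA g \<delta> * (1 - mu g m * p \<delta> m)
           - CAcls g {\<delta>} - CAdev g \<delta> in if a \<delta> then 0 \<le> A else A \<le> 0)"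
proof
  assume "a \<in> best_resp g p"
  then have h: "\<And>a'. UA g p a' \<le> UA g p a" by (simp add: best_resp_def)
  from h[of "\<lambda>_. True"] h[of "\<lambda>_. False"] show "(let A = LA g \<delta> * (mu g m * p \<delta> m) + GA g \<delta> * (1 - mu g m * p \<delta> m)
           - CAcls g {\<delta>} - CAdev g \<delta> in if a \<delta> then 0 \<le> A else A \<le> 0)"
    using assms by (simp add: UA_simp Let_def split: if_splits)
next
  assume "(let A = LA g \<delta> * (mu g m * p \<delta> m) + GA g \<delta> * (1 - mu g m * p \<delta> m)
           - CAcls g {\<delta>} - CAdev g \<delta> in if a \<delta> then 0 \<le> A else A \<le> 0)"
  then show "a \<in> best_resp g p"
    using assms by (auto simp add: best_resp_def UA_simp Let_def split: if_splits)
qed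

theorem proposition1:
  fixes g :: "('d, 'm) ra_game" and \<delta> :: 'd and m :: 'm and \<tau> :: real
  assumes "devs g = {\<delta>}" and "meths g = {m}" and "classes g = {{\<delta>}}"
    and "0 < mu g m" and "mu g m \<le> 1"
    and "0 < CD g m" and "0 \<le> CAdev g \<delta>" and "0 \<le> CAcls g {\<delta>}"
    and "LA g \<delta> < 0" and "0 < GA g \<delta>"
    and "GD g \<delta> = - LA g \<delta>" and "LD g \<delta> = - GA g \<delta>"
    and tau: "\<tau> = (1 / mu g m) * ((CAcls g {\<delta>} + CAdev g \<delta> - GA g \<delta>) / (LA g \<delta> - GA g \<delta>))"
    and "0 \<le> \<tau>" and "\<tau> \<le> 1"
  shows "optimal_def g (\<lambda>d k. if CD g m \<ge> (GD g \<delta> - LD g \<delta>) * mu g m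
                                   \<and> \<tau> \<ge> LD g \<delta> / (- CD g m)
                                then 0 else \<tau>)"
proof -
  note a = assms
  define \<mu> where "\<mu> = mu g m"
  define C where "C = CAcls g {\<delta>} + CAdev g \<delta>"
  define GA' where "GA' = GA g \<delta>"
  define LA' where "LA' = LA g \<delta>"
  define c where "c = CD g m"
  have key: "\<mu> * \<tau> * (GA' - LA') = GA' - C"
    using a(4,9,10) unfolding tau \<mu>_def C_def GA'_def LA'_def by (simp add: field_simps)
  have C0: "0 \<le> C" using a(7,8) by (simp add: C_def)
  have GA0: "0 < GA'" "LA' < 0" "0 < \<mu>" "0 < c" using a(4,6,9,10) by (auto simp: GA'_def LA'_def \<mu>_def c_def)
  define V where "V = max (- GA') (- c * \<tau>)"
  have upper: "UD g p' a' \<le> V" if f: "feasible g p'" and b: "a' \<in> best_resp g p'" for p' a'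
  proof -
    define x where "x = p' \<delta> m"
    have x01: "0 \<le> x" "x \<le> 1" using f a(1,2) by (auto simp: feasible_def x_def)
    have ud: "UD g p' a' = (if a' \<delta> then - GA' + \<mu> * x * (GA' - LA') else 0) - c * x"
      using a(1,2,11,12) by (simp add: UD_simp x_def \<mu>_def c_def GA'_def LA'_def algebra_simps)
    have br: "if a' \<delta> then 0 \<le> GA' - C - \<mu> * x * (GA' - LA') else GA' - C - \<mu> * x * (GA' - LA') \<le> 0"
      using b a(1,2,3) unfolding br_iff[OF a(1,2,3)]
      by (simp add: Let_def x_def \<mu>_def C_def GA'_def LA'_def algebra_simps split: if_splits)
    show ?thesis
    proof (cases "a' \<delta>")
      case True
      then have xt: "\<mu> * x * (GA' - LA') \<le> \<mu> * \<tau> * (GA' - LA')" using br key by simp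
      then have "x \<le> \<tau>" using GA0 by (simp add: mult_le_cancel_right mult_le_cancel_left)
      show ?thesis
      proof (cases "\<mu> * (GA' - LA') \<le> c")
        case True
        have "\<mu> * x * (GA' - LA') \<le> c * x" using mult_right_mono[OF True x01(1)] by (simp add: algebra_simps)
        then show ?thesis using ud \<open>a' \<delta>\<close> by (simp add: V_def)
      next
        case False
        have "(\<mu> * (GA' - LA') - c) * x \<le> (\<mu> * (GA' - LA') - c) * \<tau>"
          using \<open>x \<le> \<tau>\<close> False by (intro mult_left_mono) auto
        then have "UD g p' a' \<le> - GA' + \<mu> * \<tau> * (GA' - LA') - c * \<tau>"
          using ud \<open>a' \<delta>\<close> by (simp add: algebra_simps)
        then show ?thesis using key C0 by (simp add: V_def)
      qed
    next
      case False
      then have "\<mu> * \<tau> * (GA' - LA') \<le> \<mu> * x * (GA' - LA')" using br key by simp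
      then have "\<tau> \<le> x" using GA0 by (simp add: mult_le_cancel_right mult_le_cancel_left)
      then have "c * \<tau> \<le> c * x" using GA0 by simp
      then show ?thesis using ud False by (simp add: V_def)
    qed
  qed
  show ?thesis
  proof (cases "CD g m \<ge> (GD g \<delta> - LD g \<delta>) * mu g m \<and> \<tau> \<ge> LD g \<delta> / (- CD g m)")
    case True
    let ?p = "\<lambda>(d::'d) (k::'m). 0::real"
    have pe: "(\<lambda>d k. if CD g m \<ge> (GD g \<delta> - LD g \<delta>) * mu g m
                                   \<and> \<tau> \<ge> LD g \<delta> / (- CD g m)
                                then 0 else \<tau>) = ?p" using True by simp
    have "- c * \<tau> \<le> - GA'" using True GA0 a(12)
      by (simp add: c_def GA'_def field_simps)
    then have V: "V = - GA'" by (simp add: V_def)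
    have brp: "(\<lambda>_. True) \<in> best_resp g ?p"
      unfolding br_iff[OF a(1,2,3)] using key GA0 C0 a(4,14)
      by (simp add: Let_def C_def GA'_def LA'_def \<mu>_def)
        (smt (verit) mult_nonneg_nonneg)
    have ud: "UD g ?p (\<lambda>_. True) = V"
      using a(1,2,12) V by (simp add: UD_simp GA'_def)
    show ?thesis unfolding pe optimal_def_def
    proof (intro conjI bexI[of _ "\<lambda>_. True"] allI impI)
      show "feasible g ?p" by (simp add: feasible_def)
      show "(\<lambda>_. True) \<in> best_resp g ?p" by (rule brp)
      fix p' a' assume "feasible g p' \<and> a' \<in> best_resp g p'"
      then show "UD g p' a' \<le> UD g ?p (\<lambda>_. True)" using upper ud by auto
    qed
  next
    case False
    let ?p = "\<lambda>(d::'d) (k::'m). \<tau>"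
    have pe: "(\<lambda>d k. if CD g m \<ge> (GD g \<delta> - LD g \<delta>) * mu g m
                                   \<and> \<tau> \<ge> LD g \<delta> / (- CD g m)
                                then 0 else \<tau>) = ?p" using False by (intro ext) (simp only: if_False)
    have "- GA' \<le> - c * \<tau>"
    proof (cases "\<tau> \<ge> LD g \<delta> / (- CD g m)")
      case True
      then have "c < \<mu> * (GA' - LA')" using False a(11,12)
        by (simp add: c_def GA'_def LA'_def \<mu>_def algebra_simps)
      then have "c * \<tau> \<le> \<mu> * (GA' - LA') * \<tau>" using a(14) by (simp add: mult_right_mono)
      then show ?thesis using key C0 by (simp add: algebra_simps)
    next
      case F: False
      then show ?thesis using GA0 a(12)
        by (simp add: c_def GA'_def field_simps)
    qed
    then have V: "V = - c * \<tau>" by (simp add: V_def)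
    have brp: "(\<lambda>_. False) \<in> best_resp g ?p"
      unfolding br_iff[OF a(1,2,3)] using key
      by (simp add: Let_def C_def GA'_def LA'_def \<mu>_def algebra_simps)
    have ud: "UD g ?p (\<lambda>_. False) = V"
      using a(1,2) V by (simp add: UD_simp c_def)
    show ?thesis unfolding pe optimal_def_def
    proof (intro conjI bexI[of _ "\<lambda>_. False"] allI impI)
      show "feasible g ?p" using a(14,15) by (simp add: feasible_def)
      show "(\<lambda>_. False) \<in> best_resp g ?p" by (rule brp)
      fix p' a' assume "feasible g p' \<and> a' \<in> best_resp g p'"
      then show "UD g p' a' \<le> UD g ?p (\<lambda>_. False)" using upper ud by auto
    qed
  qed
qed

end
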